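(* Let $n\ge 1$ and $1\le k\le n$. The number of $\alpha\in\mathcal{ORCT}_n$ with $w^+(\alpha)=k$ is $$F(n;k)=2\sum_{p=1}^{k}\binom{n-1}{p-1}-1.$$
   Context: $X_n=\{1,2,\dots,n\}$ with its usual order; maps are written on the right ($x\alpha$). A map $\alpha:X_n\to X_n$ is order-preserving if $x\le y$ implies $x\alpha\le y\alpha$, order-reversing if $x\le y$ implies $x\alpha\ge y\alpha$, and a contraction if $|x\alpha-y\alpha|\le|x-y|$ for all $x,y$. $\mathcal{ORCT}_n$ is the set of all maps $X_n\to X_n$ (defined on all of $X_n$) that are contractions and are either order-preserving or order-reversing. Right waist $w^+(\alpha)=\max(\mathrm{Im}\,\alpha)$. *)

theory Defs
  imports "HOL-Library.FuncSet"
begin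

text \<open>Full transformations of X_n = {1..n} are represented as extensional maps
  in PiE {1..n} (\%_. {1..n}) (value undefined outside X_n).\<close>

definition order_preserving :: "nat \<Rightarrow> (nat \<Rightarrow> nat) \<Rightarrow> bool" where
  "order_preserving n f \<longleftrightarrow> (\<forall>x\<in>{1..n}. \<forall>y\<in>{1..n}. x \<le> y \<longrightarrow> f x \<le> f y)"

definition order_reversing :: "nat \<Rightarrow> (nat \<Rightarrow> nat) \<Rightarrow> bool" where
  "order_reversing n f \<longleftrightarrow> (\<forall>x\<in>{1..n}. \<forall>y\<in>{1..n}. x \<le> y \<longrightarrow> f x \<ge> f y)"

definition contraction :: "nat \<Rightarrow> (nat \<Rightarrow> nat) \<Rightarrow> bool" where
  "contraction n f \<longleftrightarrow>
     (\<forall>x\<in>{1..n}. \<forall>y\<in>{1..n}. \<bar>int (f x) - int (f y)\<bar> \<le> \<bar>int x - int y\<bar>)"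

definition ORCT :: "nat \<Rightarrow> (nat \<Rightarrow> nat) set" where
  "ORCT n = {f \<in> {1..n} \<rightarrow>\<^sub>E {1..n}.
      contraction n f \<and> (order_preserving n f \<or> order_reversing n f)}"

definition right_waist :: "nat \<Rightarrow> (nat \<Rightarrow> nat) \<Rightarrow> nat" where
  "right_waist n f = Max (f ` {1..n})"

end

theory Submission imports Defs begin

lemma card_small_subsets:
  assumes "finite A"
  shows "card {D. D \<subseteq> A \<and> card D < k} = (\<Sum>s<k. card A choose s)"
proof -
  have "{D. D \<subseteq> A \<and> card D < k} = (\<Union>s\<in>{..<k}. {D. D \<subseteq> A \<and> card D = s})" by auto
  also have "card \<dots> = (\<Sum>s<k. card {D. D \<subseteq> A \<and> card D = s})"
    by (rule card_UN_disjoint) (use assms in \<open>auto intro: finite_subset[of _ "Pow A"]\<close>)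
  also have "\<dots> = (\<Sum>s<k. card A choose s)" using n_subsets[OF assms] by simp
  finally show ?thesis .
qed

lemma sum_shift: "(\<Sum>p = 1..(k::nat). f (p - 1)) = (\<Sum>s<k. (f s::int))"
  by (induction k) auto

definition G :: "nat \<Rightarrow> nat \<Rightarrow> nat set \<Rightarrow> nat \<Rightarrow> nat" where
  "G n k D = restrict (\<lambda>x. k - card {j\<in>D. x \<le> j}) {1..n}"

definition OPk where "OPk n k = {f \<in> ORCT n. order_preserving n f \<and> right_waist n f = k}"
definition ORk where "ORk n k = {f \<in> ORCT n. order_reversing n f \<and> right_waist n f = k}"

lemma cnt_step: "{j\<in>D. i \<le> j} = (if i \<in> D then insert i {j\<in>D. Suc i \<le> j} else {j\<in>D. Suc i \<le> j})"
  by (auto simp: le_less_Suc_eq) (metis Suc_leI antisym_conv2)+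

lemma card_step: assumes "finite D"
  shows "card {j\<in>D. i \<le> j} = card {j\<in>D. Suc i \<le> j} + (if i \<in> D then 1 else 0)"
  using assms by (subst cnt_step) auto

lemma card_gap: assumes "finite (D::nat set)" "x \<le> y"
  shows "card {j\<in>D. x \<le> j} \<le> card {j\<in>D. y \<le> j} + (y - x)"
proof -
  have "{j\<in>D. x \<le> j} \<subseteq> {j\<in>D. y \<le> j} \<union> {x..<y}" by auto
  hence "card {j\<in>D. x \<le> j} \<le> card ({j\<in>D. y \<le> j} \<union> {x..<y})"
    by (intro card_mono) (use assms in auto)
  also have "\<dots> \<le> card {j\<in>D. y \<le> j} + card {x..<y}" by (rule card_Un_le)
  finally show ?thesis by simp
qed

lemma card_mono2: assumes "finite (D::nat set)" "x \<le> y"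
  shows "card {j\<in>D. y \<le> j} \<le> card {j\<in>D. x \<le> j}"
  using assms by (intro card_mono) (auto intro: order_trans)

lemma G_in:
  assumes D: "D \<subseteq> {1..n-1}" "card D < k" and "k \<le> n"
  shows "G n k D \<in> OPk n k"
proof -
  have fin: "finite D" using D finite_subset by blast
  have le: "card {j\<in>D. x \<le> j} \<le> card D" for x by (rule card_mono[OF fin]) auto
  have val: "x \<in> {1..n} \<Longrightarrow> G n k D x = k - card {j\<in>D. x \<le> j}" for x by (simp add: G_def)
  have PI: "G n k D \<in> {1..n} \<rightarrow>\<^sub>E {1..n}"
  proof -
    have "k - card {j\<in>D. x \<le> j} \<in> {1..n}" for x
      using le[of x] D(2) assms(3) by auto
    thus ?thesis unfolding G_def by auto
  qed
  have mono: "order_preserving n (G n k D)"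
    unfolding order_preserving_def using card_mono2[OF fin] by (auto simp: val diff_le_mono2)
  have con1: "int (G n k D y) - int (G n k D x) \<le> int y - int x \<and> int (G n k D x) \<le> int (G n k D y)"
    if "x \<in> {1..n}" "y \<in> {1..n}" "x \<le> y" for x y
    using card_gap[OF fin \<open>x \<le> y\<close>] card_mono2[OF fin \<open>x \<le> y\<close>] le[of x] le[of y] D(2) that
    by (auto simp: val of_nat_diff)
  have con: "contraction n (G n k D)"
    unfolding contraction_def
  proof (intro ballI)
    fix x y assume xy: "x \<in> {1..n}" "y \<in> {1..n}"
    show "\<bar>int (G n k D x) - int (G n k D y)\<bar> \<le> \<bar>int x - int y\<bar>"
    proof (cases "x \<le> y")
      case True thus ?thesis using con1[OF xy True] by linarith
    next
      case False thus ?thesis using con1[OF xy(2,1)] by linarith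
    qed
  qed
  have n1: "1 \<le> n" using assms D by linarith
  have Gn: "G n k D n = k"
  proof -
    have e: "{j\<in>D. n \<le> j} = {}" using D n1 by auto
    show ?thesis using n1 by (simp add: val e)
  qed
  have "right_waist n (G n k D) = k" unfolding right_waist_def
    using Gn n1 by (intro Max_eqI) (auto simp: val intro!: rev_image_eqI[where x=n])
  thus ?thesis using PI mono con by (simp add: OPk_def ORCT_def)
qed

lemma OP_step:
  assumes "f \<in> OPk n k" "1 \<le> x" "x < n"
  shows "f (Suc x) = f x \<or> f (Suc x) = Suc (f x)"
proof -
  have c: "contraction n f" and o: "order_preserving n f" using assms by (auto simp: OPk_def ORCT_def)
  have "\<bar>int (f x) - int (f (Suc x))\<bar> \<le> \<bar>int x - int (Suc x)\<bar>"
  proof -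
    have "x \<in> {1..n}" "Suc x \<in> {1..n}" using assms by auto
    from c[unfolded contraction_def, rule_format, OF this] show ?thesis .
  qed
  moreover have "f x \<le> f (Suc x)" using o assms unfolding order_preserving_def by auto
  ultimately show ?thesis by linarith
qed

lemma OP_top:
  assumes "f \<in> OPk n k" "1 \<le> n"
  shows "f n = k"
proof -
  have o: "order_preserving n f" and w: "right_waist n f = k" using assms by (auto simp: OPk_def)
  have "Max (f ` {1..n}) = f n"
    using o assms(2) unfolding order_preserving_def by (intro Max_eqI) auto
  thus ?thesis using w by (simp add: right_waist_def)
qed

definition Df :: "nat \<Rightarrow> (nat \<Rightarrow> nat) \<Rightarrow> nat set" where
  "Df n f = {i\<in>{1..n-1}. f i \<noteq> f (Suc i)}"

lemma G_surj:
  assumes f: "f \<in> OPk n k" and n1: "1 \<le> n"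
  shows "card (Df n f) < k \<and> f = G n k (Df n f)"
proof -
  let ?D = "Df n f"
  have fin: "finite ?D" by (simp add: Df_def)
  have key: "f (n - m) + card {j\<in>?D. n - m \<le> j} = k" if "m < n" for m
    using that
  proof (induction m)
    case 0
    have e: "{j\<in>?D. n \<le> j} = {}" by (auto simp: Df_def)
    show ?case using OP_top[OF f n1] by (simp add: e)
  next
    case (Suc m)
    define x where "x = n - Suc m"
    have x: "1 \<le> x" "x < n" "Suc x = n - m" using Suc.prems by (auto simp: x_def)
    have cs: "card {j\<in>?D. x \<le> j} = card {j\<in>?D. Suc x \<le> j} + (if x \<in> ?D then 1 else 0)"
      by (rule card_step[OF fin])
    have mem: "x \<in> ?D \<longleftrightarrow> f x \<noteq> f (Suc x)" using x by (auto simp: Df_def)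
    have IH: "f (Suc x) + card {j\<in>?D. Suc x \<le> j} = k" using Suc x by simp
    show ?case using OP_step[OF f x(1,2)] cs mem IH unfolding x_def[symmetric] by auto
  qed
  have val: "f x + card {j\<in>?D. x \<le> j} = k" if "x \<in> {1..n}" for x
    using key[of "n - x"] that by auto
  have "f 1 \<ge> 1" using f n1 by (auto simp: OPk_def ORCT_def PiE_def Pi_def)
  moreover have "{j\<in>?D. 1 \<le> j} = ?D" by (auto simp: Df_def)
  ultimately have c: "card ?D < k" using val[of 1] n1 by auto
  have extf: "f \<in> extensional {1..n}" using f by (auto simp: OPk_def ORCT_def PiE_def)
  have "f = G n k ?D"
  proof (rule ext)
    fix x show "f x = G n k ?D x"
    proof (cases "x \<in> {1..n}")
      case True thus ?thesis using val[OF True] by (auto simp: G_def)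
    next
      case False thus ?thesis using extf by (auto simp: G_def extensional_def)
    qed
  qed
  thus ?thesis using c by blast
qed

lemma G_inj:
  assumes "D \<subseteq> {1..n-1}" "card D < k" "E \<subseteq> {1..n-1}" "card E < k" "G n k D = G n k E"
  shows "D = E"
proof -
  have fD: "finite D" "finite E" using assms finite_subset by blast+
  have m: "i \<in> D \<longleftrightarrow> G n k D i \<noteq> G n k D (Suc i)" if "D \<subseteq> {1..n-1}" "card D < k" "finite D" "i \<in> {1..n-1}" for D i
  proof -
    have le: "card {j\<in>D. x \<le> j} \<le> card D" for x by (rule card_mono[OF \<open>finite D\<close>]) auto
    have "G n k D i = k - card {j\<in>D. i \<le> j}" "G n k D (Suc i) = k - card {j\<in>D. Suc i \<le> j}"
      using that by (auto simp: G_def)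
    thus ?thesis using card_step[OF \<open>finite D\<close>, of i] le[of i] le[of "Suc i"] that(2) by auto
  qed
  show ?thesis
  proof (rule set_eqI)
    fix i
    show "i \<in> D \<longleftrightarrow> i \<in> E"
    proof (cases "i \<in> {1..n-1}")
      case True thus ?thesis using m[OF assms(1,2) fD(1) True] m[OF assms(3,4) fD(2) True] assms(5) by simp
    next
      case False thus ?thesis using assms by auto
    qed
  qed
qed

lemma card_OPk:
  assumes "1 \<le> n" "k \<le> n"
  shows "card (OPk n k) = (\<Sum>s<k. (n-1) choose s)"
proof -
  let ?S = "{D. D \<subseteq> {1..n-1} \<and> card D < k}"
  have "OPk n k = G n k ` ?S"
  proof
    show "G n k ` ?S \<subseteq> OPk n k" using G_in assms by auto
    show "OPk n k \<subseteq> G n k ` ?S"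
    proof
      fix f assume f: "f \<in> OPk n k"
      have "Df n f \<subseteq> {1..n-1}" by (auto simp: Df_def)
      thus "f \<in> G n k ` ?S" using G_surj[OF f assms(1)] by blast
    qed
  qed
  moreover have "inj_on (G n k) ?S" by (rule inj_onI) (use G_inj in auto)
  ultimately have "card (OPk n k) = card ?S" by (simp add: card_image)
  also have "\<dots> = (\<Sum>s<k. (n-1) choose s)" using card_small_subsets[of "{1..n-1}" k] by simp
  finally show ?thesis .
qed

definition R :: "nat \<Rightarrow> (nat \<Rightarrow> nat) \<Rightarrow> nat \<Rightarrow> nat" where
  "R n f = restrict (\<lambda>x. f (Suc n - x)) {1..n}"

lemma R_PiE: assumes "f \<in> {1..n} \<rightarrow>\<^sub>E {1..n}" shows "R n f \<in> {1..n} \<rightarrow>\<^sub>E {1..n}"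
  unfolding R_def
proof (rule restrict_PiE_iff[THEN iffD2], rule ballI)
  fix x assume "x \<in> {1..n}"
  hence "Suc n - x \<in> {1..n}" by auto
  thus "f (Suc n - x) \<in> {1..n}" using assms by (auto simp: PiE_def Pi_def)
qed

lemma R_R: "f \<in> extensional {1..n} \<Longrightarrow> R n (R n f) = f"
  unfolding R_def by (rule ext) (auto simp: extensional_def)

lemma R_img: "(R n f) ` {1..n} = f ` {1..n}"
proof -
  have "(\<lambda>x. Suc n - x) ` {1..n} = {1..n}"
  proof
    show "(\<lambda>x. Suc n - x) ` {1..n} \<subseteq> {1..n}" by auto
    show "{1..n} \<subseteq> (\<lambda>x. Suc n - x) ` {1..n}"
    proof
      fix y assume "y \<in> {1..n}" thus "y \<in> (\<lambda>x. Suc n - x) ` {1..n}"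
        by (intro rev_image_eqI[where x="Suc n - y"]) auto
    qed
  qed
  hence "f ` ((\<lambda>x. Suc n - x) ` {1..n}) = f ` {1..n}" by simp
  thus ?thesis unfolding R_def image_image by simp
qed

lemma R_contr: "contraction n f \<Longrightarrow> contraction n (R n f)"
  unfolding contraction_def R_def
proof (intro ballI)
  fix x y assume c: "\<forall>x\<in>{1..n}. \<forall>y\<in>{1..n}. \<bar>int (f x) - int (f y)\<bar> \<le> \<bar>int x - int y\<bar>"
    and xy: "x \<in> {1..n}" "y \<in> {1..n}"
  have "Suc n - x \<in> {1..n}" "Suc n - y \<in> {1..n}" using xy by auto
  from c[rule_format, OF this] xy
  show "\<bar>int (restrict (\<lambda>x. f (Suc n - x)) {1..n} x) - int (restrict (\<lambda>x. f (Suc n - x)) {1..n} y)\<bar> \<le> \<bar>int x - int y\<bar>"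
    by (simp add: of_nat_diff)
qed

lemma R_op: "order_reversing n f \<Longrightarrow> order_preserving n (R n f)"
  unfolding order_reversing_def order_preserving_def R_def
proof (intro ballI impI)
  fix x y assume o: "\<forall>x\<in>{1..n}. \<forall>y\<in>{1..n}. x \<le> y \<longrightarrow> f x \<ge> f y"
    and xy: "x \<in> {1..n}" "y \<in> {1..n}" "x \<le> y"
  have "Suc n - y \<in> {1..n}" "Suc n - x \<in> {1..n}" "Suc n - y \<le> Suc n - x" using xy by auto
  from o[rule_format, OF this] xy
  show "restrict (\<lambda>x. f (Suc n - x)) {1..n} x \<le> restrict (\<lambda>x. f (Suc n - x)) {1..n} y" by simp
qed

lemma R_or: "order_preserving n f \<Longrightarrow> order_reversing n (R n f)"
  unfolding order_reversing_def order_preserving_def R_def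
proof (intro ballI impI)
  fix x y assume o: "\<forall>x\<in>{1..n}. \<forall>y\<in>{1..n}. x \<le> y \<longrightarrow> f x \<le> f y"
    and xy: "x \<in> {1..n}" "y \<in> {1..n}" "x \<le> y"
  have "Suc n - y \<in> {1..n}" "Suc n - x \<in> {1..n}" "Suc n - y \<le> Suc n - x" using xy by auto
  from o[rule_format, OF this] xy
  show "restrict (\<lambda>x. f (Suc n - x)) {1..n} y \<le> restrict (\<lambda>x. f (Suc n - x)) {1..n} x" by simp
qed

lemma R_waist: "right_waist n (R n f) = right_waist n f"
  unfolding right_waist_def using R_img[of n f] by argo

lemma card_ORk: "card (ORk n k) = card (OPk n k)"
proof -
  have ext: "f \<in> extensional {1..n}" if "f \<in> ORCT n" for f using that by (auto simp: ORCT_def PiE_def)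
  have A: "R n ` ORk n k \<subseteq> OPk n k"
  proof (rule image_subsetI)
    fix f assume "f \<in> ORk n k"
    hence "f \<in> {1..n} \<rightarrow>\<^sub>E {1..n}" "contraction n f" "order_reversing n f" "right_waist n f = k"
      by (simp_all add: ORk_def ORCT_def)
    thus "R n f \<in> OPk n k" unfolding OPk_def ORCT_def
      using R_PiE R_contr R_op R_waist by simp
  qed
  have B: "R n ` OPk n k \<subseteq> ORk n k"
  proof (rule image_subsetI)
    fix f assume "f \<in> OPk n k"
    hence "f \<in> {1..n} \<rightarrow>\<^sub>E {1..n}" "contraction n f" "order_preserving n f" "right_waist n f = k"
      by (simp_all add: OPk_def ORCT_def)
    thus "R n f \<in> ORk n k" unfolding ORk_def ORCT_def
      using R_PiE R_contr R_or R_waist by simp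
  qed
  have "OPk n k \<subseteq> R n ` ORk n k"
  proof
    fix f assume f: "f \<in> OPk n k"
    hence "R n (R n f) = f" using ext by (auto simp: OPk_def intro: R_R)
    moreover have "R n f \<in> ORk n k" using B f by auto
    ultimately show "f \<in> R n ` ORk n k" by (metis imageI)
  qed
  hence "R n ` ORk n k = OPk n k" using A by auto
  moreover have "inj_on (R n) (ORk n k)"
    by (rule inj_on_inverseI[where g="R n"]) (use ext R_R in \<open>auto simp: ORk_def\<close>)
  ultimately show ?thesis by (metis card_image)
qed

lemma inter_OPOR:
  assumes "1 \<le> k" "k \<le> n"
  shows "OPk n k \<inter> ORk n k = {restrict (\<lambda>_. k) {1..n}}"
proof
  show "OPk n k \<inter> ORk n k \<subseteq> {restrict (\<lambda>_. k) {1..n}}"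
  proof
    fix f assume f: "f \<in> OPk n k \<inter> ORk n k"
    have top: "f n = k" using OP_top[of f n k] f assms by auto
    have o: "order_preserving n f" "order_reversing n f" and extf: "f \<in> extensional {1..n}"
      using f by (auto simp: OPk_def ORk_def ORCT_def PiE_def)
    have "f = restrict (\<lambda>_. k) {1..n}"
    proof (rule ext)
      fix x show "f x = restrict (\<lambda>_. k) {1..n} x"
      proof (cases "x \<in> {1..n}")
        case True
        hence "f x \<le> f n" "f x \<ge> f n" using o assms
          unfolding order_preserving_def order_reversing_def by auto
        thus ?thesis using True top by simp
      next
        case False thus ?thesis using extf by (auto simp: extensional_def)
      qed
    qed
    thus "f \<in> {restrict (\<lambda>_. k) {1..n}}" by simp
  qed
  let ?c = "restrict (\<lambda>_. k) {1..n}"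
  have w: "right_waist n ?c = k" unfolding right_waist_def using assms
    by (intro Max_eqI) (auto intro!: rev_image_eqI[where x=n])
  have "?c \<in> ORCT n" using assms
    by (auto simp: ORCT_def contraction_def order_preserving_def PiE_def Pi_def)
  thus "{?c} \<subseteq> OPk n k \<inter> ORk n k" using w
    by (auto simp: OPk_def ORk_def order_preserving_def order_reversing_def)
qed

theorem corollary3p5:
  fixes n k :: nat
  assumes "1 \<le> n" and "1 \<le> k" and "k \<le> n"
  shows "int (card {f \<in> ORCT n. right_waist n f = k})
           = 2 * (\<Sum>p = 1..k. int ((n - 1) choose (p - 1))) - 1"
proof -
  have U: "{f \<in> ORCT n. right_waist n f = k} = OPk n k \<union> ORk n k"
    by (auto simp: OPk_def ORk_def ORCT_def)
  have fin: "finite (OPk n k)" "finite (ORk n k)"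
  proof -
    have "ORCT n \<subseteq> {1..n} \<rightarrow>\<^sub>E {1..n}" by (auto simp: ORCT_def)
    moreover have "finite ({1..n} \<rightarrow>\<^sub>E {1..n::nat})" by (rule finite_PiE) auto
    ultimately have "finite (ORCT n)" by (rule finite_subset)
    thus "finite (OPk n k)" "finite (ORk n k)" by (auto simp: OPk_def ORk_def)
  qed
  have "card (OPk n k \<union> ORk n k) + card (OPk n k \<inter> ORk n k) = card (OPk n k) + card (ORk n k)"
    using card_Un_Int[OF fin] by simp
  hence "card (OPk n k \<union> ORk n k) + 1 = 2 * (\<Sum>s<k. (n-1) choose s)"
    using inter_OPOR[OF assms(2,3)] card_ORk[of n k] card_OPk[OF assms(1,3)] by simp
  hence "int (card (OPk n k \<union> ORk n k)) = 2 * int (\<Sum>s<k. (n-1) choose s) - 1" by linarith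
  also have "int (\<Sum>s<k. (n-1) choose s) = (\<Sum>p = 1..k. int ((n - 1) choose (p - 1)))"
    using sum_shift[of "\<lambda>s. int ((n-1) choose s)" k] by (simp add: of_nat_sum)
  finally show ?thesis using U by simp
qed

end
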